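(* Let $\Gamma$ be a finite dynamic game with ordinal preferences and perfect recall, let $u=(u_j)_{j\in I}$ be a profile of utility functions with $u_j\in\mathcal U_j$ for every $j$, and let $R\subseteq S$ be a restriction. Then $\mathbb M(R)[u]\subseteq\mathbb U(R)$.
   Context: A finite dynamic game with ordinal preferences and perfect recall $\Gamma$ consists of: a finite set of players $I$; a finite rooted tree of histories (finite sequences of action profiles, simultaneous moves allowed) with terminal histories $Z$; for each $i$ a partition $H_i$ of the non-terminal histories where $i$ is active (at least two actions) into information sets with identical available actions; perfect recall; complete transitive preferences $\succsim_i$ on $Z$ (asymmetric part $\succ_i$). Strategies of $i$ are equivalence classes of behaviorally equivalent standard strategies (action assignments to $H_i$, identified when they allow the same information sets and prescribe the same actions there); $S_i$ is the finite set of strategies, $S=\prod_jS_j$, $S_{-i}=\prod_{j\ne i}S_j$, $\zeta:S\to Z$ the outcome map. For $h\in H_i$, $S_i(h)$, $S_{-i}(h)$ are strategies of $i$, resp. profiles of others, reaching $h$; $H_i(s_i)=\{h\in H_i:s_i\in S_i(h)\}$. A restriction is a nonempty $R=\prod_jR_j\subseteq S$; $R_i(h)=R_i\cap S_i(h)$, $R_{-i}(h)=R_{-i}\cap S_{-i}(h)$, $R^i(h)=R_i(h)\times R_{-i}(h)$. For $P=P_i\times P_{-i}$ ($P_{-i}\subseteq S_{-i}$ not necessarily a product), $s_i\in P_i$ is weakly dominated relative to $P$ by $t_i\in P_i$ if $\zeta(t_i,s_{-i})\succsim_i\zeta(s_i,s_{-i})$ for all $s_{-i}\in P_{-i}$ with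 $\succ_i$ for some; B-dominated w.r.t. $P$ if for every nonempty $Q_{-i}\subseteq P_{-i}$ it is weakly dominated relative to $P_i\times Q_{-i}$ by some strategy in $P_i$. $s_i\in R_i$ is conditionally B-dominated w.r.t. $R$ if some $h\in H_i(s_i)$ has $R^i(h)\ne\emptyset$ and $s_i$ B-dominated w.r.t. $R^i(h)$. $\mathbb U_i(R)$ is the set of $s_i\in R_i$ not conditionally B-dominated w.r.t. $R$; $\mathbb U(R)=\prod_j\mathbb U_j(R)$. $\mathcal U_i$ is the set of $u_i:Z\to\mathbb R$ with $u_i(z)\ge u_i(z')\iff z\succsim_iz'$. Given $u_i$, $s_i\in P_i$ is strictly dominated relative to $P=P_i\times P_{-i}$ by a mixed strategy if there is a probability distribution $\sigma$ on $P_i$ with $\sum_{t_i\in P_i}\sigma(t_i)u_i(\zeta(t_i,s_{-i}))>u_i(\zeta(s_i,s_{-i}))$ for every $s_{-i}\in P_{-i}$. $\mathbb M_i(R)[u_i]$ is the set of $s_i\in R_i$ such that for every $h\in H_i(s_i)$ with $R^i(h)\ne\emptyset$, $s_i$ is not strictly dominated relative to $R^i(h)$ by a mixed strategy (given $u_i$); $\mathbb M(R)[u]=\prod_j\mathbb M_j(R)[u_j]$. *)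

theory Defs
  imports Complex_Main "HOL-Library.FuncSet"
begin

text \<open>An action profile is a function
  'i => 'a (only its values on the player set matter); a history is a finite list of
  action profiles. A (reduced)
  strategy of player i is a partial map from information sets of i to actions.\<close>

type_synonym ('i,'a) hist = "('i \<Rightarrow> 'a) list"
type_synonym ('i,'a) infoset = "('i,'a) hist set"
type_synonym ('i,'a) strat = "('i,'a) infoset \<Rightarrow> 'a option"

record ('i,'a) game =
  players :: "'i set"
  hists   :: "('i,'a) hist set"
  acts    :: "'i \<Rightarrow> ('i,'a) hist \<Rightarrow> 'a set"
  info    :: "'i \<Rightarrow> ('i,'a) infoset set"
  pref    :: "'i \<Rightarrow> ('i,'a) hist \<Rightarrow> ('i,'a) hist \<Rightarrow> bool"  \<comment> \<open>pref i z z' : z \<succeq>_i z'\<close>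

definition terminal :: "('i,'a) game \<Rightarrow> ('i,'a) hist \<Rightarrow> bool" where
  "terminal G h \<longleftrightarrow> h \<in> hists G \<and> (\<forall>a. h @ [a] \<notin> hists G)"

definition Zset :: "('i,'a) game \<Rightarrow> ('i,'a) hist set" where
  "Zset G = {h. terminal G h}"

definition nonterm :: "('i,'a) game \<Rightarrow> ('i,'a) hist \<Rightarrow> bool" where
  "nonterm G h \<longleftrightarrow> h \<in> hists G \<and> \<not> terminal G h"

definition active :: "('i,'a) game \<Rightarrow> 'i \<Rightarrow> ('i,'a) hist \<Rightarrow> bool" where
  "active G i h \<longleftrightarrow> nonterm G h \<and> i \<in> players G \<and>
     (\<exists>a\<in>acts G i h. \<exists>b\<in>acts G i h. a \<noteq> b)"

definition infoset_of :: "('i,'a) game \<Rightarrow> 'i \<Rightarrow> ('i,'a) hist \<Rightarrow> ('i,'a) infoset" where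
  "infoset_of G i h = (THE X. X \<in> info G i \<and> h \<in> X)"

text \<open>Experience of player i along h: the sequence of (own information set, own action)
  pairs at the prefixes of h where i is active (Kuhn / Osborne--Rubinstein perfect recall).\<close>
definition experience :: "('i,'a) game \<Rightarrow> 'i \<Rightarrow> ('i,'a) hist \<Rightarrow> (('i,'a) infoset \<times> 'a) list" where
  "experience G i h =
     map (\<lambda>k. (infoset_of G i (take k h), (h ! k) i))
         (filter (\<lambda>k. active G i (take k h)) [0..<length h])"

definition finite_game :: "('i,'a) game \<Rightarrow> bool" where
  "finite_game G \<longleftrightarrow>
     finite (players G) \<and> finite (hists G) \<and>
     [] \<in> hists G \<and>
     (\<forall>h a. h @ [a] \<in> hists G \<longrightarrow> h \<in> hists G) \<and>
     (\<forall>h. nonterm G h \<longrightarrow>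
        (\<forall>i\<in>players G. finite (acts G i h) \<and> acts G i h \<noteq> {}) \<and>
        (\<forall>a. h @ [a] \<in> hists G \<longleftrightarrow> a \<in> (\<Pi>\<^sub>E j\<in>players G. acts G j h))) \<and>
     (\<forall>i\<in>players G.
        \<Union>(info G i) = {h. active G i h} \<and>
        (\<forall>X\<in>info G i. X \<noteq> {}) \<and>
        (\<forall>X\<in>info G i. \<forall>Y\<in>info G i. X \<noteq> Y \<longrightarrow> X \<inter> Y = {}) \<and>
        (\<forall>X\<in>info G i. \<forall>h\<in>X. \<forall>h'\<in>X. acts G i h = acts G i h') \<and>
        (\<forall>X\<in>info G i. \<forall>h\<in>X. \<forall>h'\<in>X. experience G i h = experience G i h') \<and>
        (\<forall>z\<in>Zset G. \<forall>z'\<in>Zset G. pref G i z z' \<or> pref G i z' z) \<and>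
        (\<forall>z\<in>Zset G. \<forall>z'\<in>Zset G. \<forall>z''\<in>Zset G.
            pref G i z z' \<longrightarrow> pref G i z' z'' \<longrightarrow> pref G i z z''))"

text \<open>Action profile played at h under a (partial) strategy profile p: active players
  follow their strategies at their information set, inactive players take their unique action.\<close>
definition next_prof :: "('i,'a) game \<Rightarrow> ('i \<Rightarrow> ('i,'a) strat) \<Rightarrow> ('i,'a) hist \<Rightarrow> ('i \<Rightarrow> 'a)" where
  "next_prof G p h = restrict (\<lambda>j.
       if active G j h then the (p j (infoset_of G j h)) else the_elem (acts G j h)) (players G)"

inductive on_path :: "('i,'a) game \<Rightarrow> ('i \<Rightarrow> ('i,'a) strat) \<Rightarrow> ('i,'a) hist \<Rightarrow> bool"
  for G p where
  Nil: "on_path G p []"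
| step: "on_path G p h \<Longrightarrow> nonterm G h \<Longrightarrow> on_path G p (h @ [next_prof G p h])"

definition zeta :: "('i,'a) game \<Rightarrow> ('i \<Rightarrow> ('i,'a) strat) \<Rightarrow> ('i,'a) hist" where
  "zeta G p = (THE z. z \<in> Zset G \<and> on_path G p z)"

definition std_strats :: "('i,'a) game \<Rightarrow> 'i \<Rightarrow> ('i,'a) strat set" where
  "std_strats G i = {s. dom s = info G i \<and> (\<forall>X\<in>info G i. \<forall>h\<in>X. the (s X) \<in> acts G i h)}"

definition allows :: "('i,'a) game \<Rightarrow> 'i \<Rightarrow> ('i,'a) strat \<Rightarrow> ('i,'a) infoset \<Rightarrow> bool" where
  "allows G i s X \<longleftrightarrow> (\<exists>\<sigma>. (\<forall>j\<in>players G. \<sigma> j \<in> std_strats G j) \<and> \<sigma> i = s \<and>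
                          (\<exists>h\<in>X. on_path G \<sigma> h))"

text \<open>Strategies = equivalence classes of behaviourally equivalent standard strategies;
  each class is represented canonically by the restriction of any member to the
  information sets it allows (two standard strategies are identified iff these restrictions agree).\<close>
definition Strats :: "('i,'a) game \<Rightarrow> 'i \<Rightarrow> ('i,'a) strat set" where
  "Strats G i = (\<lambda>s. s |` {X \<in> info G i. allows G i s X}) ` std_strats G i"

definition Strats_others :: "('i,'a) game \<Rightarrow> 'i \<Rightarrow> ('i \<Rightarrow> ('i,'a) strat) set" where
  "Strats_others G i = (\<Pi>\<^sub>E j\<in>players G - {i}. Strats G j)"

definition join :: "'i \<Rightarrow> ('i,'a) strat \<Rightarrow> ('i \<Rightarrow> ('i,'a) strat) \<Rightarrow> ('i \<Rightarrow> ('i,'a) strat)" where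
  "join i si smi = smi(i := si)"

definition reaches :: "('i,'a) game \<Rightarrow> ('i \<Rightarrow> ('i,'a) strat) \<Rightarrow> ('i,'a) infoset \<Rightarrow> bool" where
  "reaches G p X \<longleftrightarrow> (\<exists>h\<in>X. on_path G p h)"

definition Strats_at :: "('i,'a) game \<Rightarrow> 'i \<Rightarrow> ('i,'a) infoset \<Rightarrow> ('i,'a) strat set" where
  "Strats_at G i X = {si \<in> Strats G i. \<exists>smi\<in>Strats_others G i. reaches G (join i si smi) X}"

definition Strats_others_at :: "('i,'a) game \<Rightarrow> 'i \<Rightarrow> ('i,'a) infoset \<Rightarrow> ('i \<Rightarrow> ('i,'a) strat) set" where
  "Strats_others_at G i X = {smi \<in> Strats_others G i. \<exists>si\<in>Strats G i. reaches G (join i si smi) X}"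

definition Hs :: "('i,'a) game \<Rightarrow> 'i \<Rightarrow> ('i,'a) strat \<Rightarrow> ('i,'a) infoset set" where
  "Hs G i si = {X \<in> info G i. si \<in> Strats_at G i X}"

definition restriction :: "('i,'a) game \<Rightarrow> ('i \<Rightarrow> ('i,'a) strat set) \<Rightarrow> bool" where
  "restriction G R \<longleftrightarrow> (\<forall>j\<in>players G. R j \<subseteq> Strats G j \<and> R j \<noteq> {})"

definition R_others :: "('i,'a) game \<Rightarrow> ('i \<Rightarrow> ('i,'a) strat set) \<Rightarrow> 'i \<Rightarrow> ('i \<Rightarrow> ('i,'a) strat) set" where
  "R_others G R i = (\<Pi>\<^sub>E j\<in>players G - {i}. R j)"

definition R_at :: "('i,'a) game \<Rightarrow> ('i \<Rightarrow> ('i,'a) strat set) \<Rightarrow> 'i \<Rightarrow> ('i,'a) infoset \<Rightarrow> ('i,'a) strat set" where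
  "R_at G R i X = R i \<inter> Strats_at G i X"

definition R_others_at :: "('i,'a) game \<Rightarrow> ('i \<Rightarrow> ('i,'a) strat set) \<Rightarrow> 'i \<Rightarrow> ('i,'a) infoset \<Rightarrow> ('i \<Rightarrow> ('i,'a) strat) set" where
  "R_others_at G R i X = R_others G R i \<inter> Strats_others_at G i X"

definition strict_pref :: "('i,'a) game \<Rightarrow> 'i \<Rightarrow> ('i,'a) hist \<Rightarrow> ('i,'a) hist \<Rightarrow> bool" where
  "strict_pref G i z z' \<longleftrightarrow> pref G i z z' \<and> \<not> pref G i z' z"

definition weakly_dominated_by ::
  "('i,'a) game \<Rightarrow> 'i \<Rightarrow> ('i,'a) strat set \<Rightarrow> ('i \<Rightarrow> ('i,'a) strat) set \<Rightarrow> ('i,'a) strat \<Rightarrow> ('i,'a) strat \<Rightarrow> bool" where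
  "weakly_dominated_by G i Ps Pmi si ti \<longleftrightarrow> si \<in> Ps \<and> ti \<in> Ps \<and>
     (\<forall>smi\<in>Pmi. pref G i (zeta G (join i ti smi)) (zeta G (join i si smi))) \<and>
     (\<exists>smi\<in>Pmi. strict_pref G i (zeta G (join i ti smi)) (zeta G (join i si smi)))"

definition B_dominated ::
  "('i,'a) game \<Rightarrow> 'i \<Rightarrow> ('i,'a) strat set \<Rightarrow> ('i \<Rightarrow> ('i,'a) strat) set \<Rightarrow> ('i,'a) strat \<Rightarrow> bool" where
  "B_dominated G i Ps Pmi si \<longleftrightarrow> si \<in> Ps \<and>
     (\<forall>Q. Q \<noteq> {} \<and> Q \<subseteq> Pmi \<longrightarrow> (\<exists>ti\<in>Ps. weakly_dominated_by G i Ps Q si ti))"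

definition cond_B_dominated :: "('i,'a) game \<Rightarrow> ('i \<Rightarrow> ('i,'a) strat set) \<Rightarrow> 'i \<Rightarrow> ('i,'a) strat \<Rightarrow> bool" where
  "cond_B_dominated G R i si \<longleftrightarrow>
     (\<exists>X\<in>Hs G i si. R_at G R i X \<noteq> {} \<and> R_others_at G R i X \<noteq> {} \<and>
        B_dominated G i (R_at G R i X) (R_others_at G R i X) si)"

definition UU :: "('i,'a) game \<Rightarrow> ('i \<Rightarrow> ('i,'a) strat set) \<Rightarrow> 'i \<Rightarrow> ('i,'a) strat set" where
  "UU G R i = {si \<in> R i. \<not> cond_B_dominated G R i si}"

definition utility_rep :: "('i,'a) game \<Rightarrow> 'i \<Rightarrow> (('i,'a) hist \<Rightarrow> real) \<Rightarrow> bool" where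
  "utility_rep G i ui \<longleftrightarrow> (\<forall>z\<in>Zset G. \<forall>z'\<in>Zset G. ui z \<ge> ui z' \<longleftrightarrow> pref G i z z')"

definition strictly_dominated_mixed ::
  "('i,'a) game \<Rightarrow> 'i \<Rightarrow> (('i,'a) hist \<Rightarrow> real) \<Rightarrow> ('i,'a) strat set \<Rightarrow> ('i \<Rightarrow> ('i,'a) strat) set \<Rightarrow> ('i,'a) strat \<Rightarrow> bool" where
  "strictly_dominated_mixed G i ui Ps Pmi si \<longleftrightarrow>
     (\<exists>\<sigma>::('i,'a) strat \<Rightarrow> real. (\<forall>t\<in>Ps. \<sigma> t \<ge> 0) \<and> (\<Sum>t\<in>Ps. \<sigma> t) = 1 \<and>
        (\<forall>smi\<in>Pmi. (\<Sum>t\<in>Ps. \<sigma> t * ui (zeta G (join i t smi))) > ui (zeta G (join i si smi))))"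

definition MM :: "('i,'a) game \<Rightarrow> ('i \<Rightarrow> ('i,'a) strat set) \<Rightarrow> ('i \<Rightarrow> ('i,'a) hist \<Rightarrow> real) \<Rightarrow> 'i \<Rightarrow> ('i,'a) strat set" where
  "MM G R u i = {si \<in> R i. \<forall>X\<in>Hs G i si.
      R_at G R i X \<noteq> {} \<and> R_others_at G R i X \<noteq> {} \<longrightarrow>
      \<not> strictly_dominated_mixed G i (u i) (R_at G R i X) (R_others_at G R i X) si}"

end

theory Submission
  imports Defs
begin

lemma mix_lemma:
  fixes f :: "'s \<Rightarrow> 't \<Rightarrow> real"
  assumes fin: "finite Ps" and fQ0: "finite Q0"
  and dom: "\<forall>Q. Q \<noteq> {} \<and> Q \<subseteq> Q0 \<longrightarrow> (\<exists>t\<in>Ps. (\<forall>s\<in>Q. f t s \<ge> f si s) \<and> (\<exists>s\<in>Q. f t s > f si s))"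
  shows "Q \<subseteq> Q0 \<Longrightarrow> Q \<noteq> {} \<Longrightarrow> \<exists>\<sigma>. (\<forall>t\<in>Ps. \<sigma> t \<ge> 0) \<and> sum \<sigma> Ps = 1 \<and> (\<forall>s\<in>Q. (\<Sum>t\<in>Ps. \<sigma> t * f t s) > f si s)"
proof -
  assume "Q \<subseteq> Q0" "Q \<noteq> {}"
  have fQ: "finite Q" using \<open>Q \<subseteq> Q0\<close> fQ0 finite_subset by blast
  from fQ \<open>Q \<subseteq> Q0\<close> \<open>Q \<noteq> {}\<close> show ?thesis
  proof (induction Q rule: finite_psubset_induct)
    case (psubset Q)
    have "\<exists>t\<in>Ps. (\<forall>s\<in>Q. f t s \<ge> f si s) \<and> (\<exists>s\<in>Q. f t s > f si s)"
      using spec[OF dom, of Q] psubset.prems by simp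
    then obtain t where t: "t \<in> Ps" "\<forall>s\<in>Q. f t s \<ge> f si s" "\<exists>s\<in>Q. f t s > f si s"
      by blast
    define A where "A = {s\<in>Q. f t s > f si s}"
    define Q' where "Q' = Q - A"
    have delta: "(\<Sum>x\<in>Ps. (if x = t then 1 else 0) * f x s) = f t s" for s
    proof -
      have "(\<Sum>x\<in>Ps. (if x = t then 1 else 0) * f x s) = (\<Sum>x\<in>Ps. if x = t then f x s else 0)"
        by (rule sum.cong) auto
      also have "\<dots> = f t s" using fin t(1) by (simp add: sum.delta)
      finally show ?thesis .
    qed
    show ?case
    proof (cases "Q' = {}")
      case True
      show ?thesis
        apply (rule exI[of _ "\<lambda>x. if x = t then 1 else 0"])
        using True t fin delta unfolding Q'_def A_def by (auto simp: sum.delta)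
    next
      case False
      have "Q' \<subset> Q" using t(3) unfolding Q'_def A_def by blast
      with psubset.IH[of Q'] False psubset.prems(1) obtain \<sigma>' where
        s': "\<forall>t\<in>Ps. \<sigma>' t \<ge> 0" "sum \<sigma>' Ps = 1" "\<forall>s\<in>Q'. (\<Sum>t\<in>Ps. \<sigma>' t * f t s) > f si s"
        by blast
      define g where "g s = (\<Sum>t\<in>Ps. \<sigma>' t * f t s)" for s
      have ev1: "\<forall>s\<in>A. \<forall>\<^sub>F e in at_right (0::real). (1 - e) * f t s + e * g s > f si s"
      proof
        fix s assume "s \<in> A"
        hence gt: "f t s > f si s" unfolding A_def by auto
        have "((\<lambda>e. (1 - e) * f t s + e * g s) \<longlongrightarrow> (1 - 0) * f t s + 0 * g s) (at_right (0::real))"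
          by (intro tendsto_intros)
        hence "((\<lambda>e. (1 - e) * f t s + e * g s) \<longlongrightarrow> f t s) (at_right (0::real))" by simp
        from order_tendstoD(1)[OF this gt] show "\<forall>\<^sub>F e in at_right (0::real). (1 - e) * f t s + e * g s > f si s" .
      qed
      have finA: "finite A" using psubset.hyps unfolding A_def by auto
      have "\<forall>\<^sub>F e in at_right (0::real). 0 < e \<and> e < 1 \<and> (\<forall>s\<in>A. (1 - e) * f t s + e * g s > f si s)"
        using eventually_conj[OF eventually_at_right_less[of "0::real"] eventually_conj[OF eventually_at_right_real[of 0 1] eventually_ball_finite[OF finA ev1]]]
        by (rule eventually_mono) auto
      then obtain e where e: "0 < e" "e < 1" "\<forall>s\<in>A. (1 - e) * f t s + e * g s > f si s"
        using eventually_happens'[of "at_right (0::real)"] by fastforce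
      define \<tau> where "\<tau> x = (1 - e) * (if x = t then 1 else 0) + e * \<sigma>' x" for x
      have exp: "(\<Sum>x\<in>Ps. \<tau> x * f x s) = (1 - e) * f t s + e * g s" for s
      proof -
        have "(\<Sum>x\<in>Ps. \<tau> x * f x s) = (\<Sum>x\<in>Ps. (1 - e) * ((if x = t then 1 else 0) * f x s) + e * (\<sigma>' x * f x s))"
          unfolding \<tau>_def by (intro sum.cong) (auto simp: algebra_simps)
        also have "\<dots> = (1 - e) * f t s + e * g s"
          by (simp add: sum.distrib sum_distrib_left[symmetric] delta g_def)
        finally show ?thesis .
      qed
      have "sum \<tau> Ps = (1 - e) * 1 + e * 1"
        unfolding \<tau>_def using fin t(1) s'(2) by (simp add: sum.distrib sum_distrib_left[symmetric])
      moreover have "\<forall>x\<in>Ps. \<tau> x \<ge> 0" unfolding \<tau>_def using e s'(1) by auto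
      moreover have "\<forall>s\<in>Q. (\<Sum>x\<in>Ps. \<tau> x * f x s) > f si s"
      proof
        fix s assume "s \<in> Q"
        show "(\<Sum>x\<in>Ps. \<tau> x * f x s) > f si s"
        proof (cases "s \<in> A")
          case True then show ?thesis using e exp by auto
        next
          case False
          hence "s \<in> Q'" using \<open>s\<in>Q\<close> unfolding Q'_def by auto
          hence "g s > f si s" using s'(3) g_def by auto
          moreover have "f t s \<ge> f si s" using t(2) \<open>s\<in>Q\<close> by auto
          ultimately have "(1 - e) * f t s + e * g s > (1 - e) * f si s + e * f si s"
            using e by (intro add_le_less_mono mult_left_mono mult_strict_left_mono) auto
          moreover have "(1 - e) * f si s + e * f si s = f si s" by (simp add: algebra_simps)
          ultimately show ?thesis using exp[of s] by linarith
        qed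
      qed
      ultimately show ?thesis by auto
    qed
  qed
qed
lemma on_path_app:
  assumes "on_path G p (h @ [a])"
  shows "on_path G p h \<and> nonterm G h \<and> a = next_prof G p h"
  using assms by (cases rule: on_path.cases) auto

lemma on_path_len_unique:
  assumes "on_path G p h" "on_path G p h'" "length h = length h'"
  shows "h = h'"
  using assms
proof (induction arbitrary: h' rule: on_path.induct)
  case Nil then show ?case by simp
next
  case (step h)
  obtain h'' b where h': "h' = h'' @ [b]"
    using step.prems(2) by (cases h' rule: rev_exhaust) auto
  from on_path_app[of G p h'' b] step.prems(1) h' have "on_path G p h''" "b = next_prof G p h''" by auto
  with step.IH[of h''] step.prems h' show ?case by auto
qed

lemma on_path_take:
  assumes "on_path G p h"
  shows "on_path G p (take k h)"
  using assms
proof (induction rule: on_path.induct)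
  case Nil then show ?case by (simp add: on_path.Nil)
next
  case (step h)
  show ?case
  proof (cases "k \<le> length h")
    case True then show ?thesis using step.IH by simp
  next
    case False then show ?thesis using on_path.step[OF step.hyps] by simp
  qed
qed

lemma terminal_unique:
  assumes "on_path G p z" "terminal G z" "on_path G p z'" "terminal G z'"
  shows "z = z'"
proof -
  have *: "False" if "on_path G p x" "terminal G x" "on_path G p y" "length x < length y" for x y
  proof -
    have "on_path G p (take (Suc (length x)) y)" using on_path_take that(3) by blast
    moreover have "take (Suc (length x)) y = take (length x) y @ [y ! length x]"
      using that(4) by (simp add: take_Suc_conv_app_nth)
    moreover have "take (length x) y = x"
      using on_path_len_unique[OF on_path_take[OF that(3), of "length x"] that(1)] that(4) by simp
    ultimately have "on_path G p (x @ [y ! length x])" by simp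
    hence "nonterm G x" using on_path_app by blast
    thus False using that(2) unfolding nonterm_def by simp
  qed
  show ?thesis
  proof (cases "length z = length z'")
    case True then show ?thesis using on_path_len_unique assms by blast
  next
    case False
    then consider "length z < length z'" | "length z' < length z" by linarith
    then show ?thesis using * assms by metis
  qed
qed

lemma infoset_of_props:
  assumes fg: "finite_game G" and k: "k \<in> players G" and act: "active G k h"
  shows "infoset_of G k h \<in> info G k \<and> h \<in> infoset_of G k h"
proof -
  from fg k have U: "\<Union>(info G k) = {h. active G k h}"
    and D: "\<forall>X\<in>info G k. \<forall>Y\<in>info G k. X \<noteq> Y \<longrightarrow> X \<inter> Y = {}"
    unfolding finite_game_def by auto
  from U act obtain X where X: "X \<in> info G k" "h \<in> X" by blast
  have "\<exists>!X. X \<in> info G k \<and> h \<in> X" using X D by blast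
  from theI'[OF this] show ?thesis unfolding infoset_of_def .
qed

lemma std_path_hists:
  assumes fg: "finite_game G" and std: "\<forall>k\<in>players G. \<sigma> k \<in> std_strats G k"
    and "on_path G \<sigma> h"
  shows "h \<in> hists G"
  using assms(3)
proof (induction rule: on_path.induct)
  case Nil then show ?case using fg unfolding finite_game_def by simp
next
  case (step h)
  have "next_prof G \<sigma> h \<in> (\<Pi>\<^sub>E j\<in>players G. acts G j h)"
  proof -
    have "(if active G j h then the (\<sigma> j (infoset_of G j h)) else the_elem (acts G j h)) \<in> acts G j h"
      if j: "j \<in> players G" for j
    proof (cases "active G j h")
      case True
      from infoset_of_props[OF fg j True] have "infoset_of G j h \<in> info G j" "h \<in> infoset_of G j h" by auto
      with std j show ?thesis using True unfolding std_strats_def by auto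
    next
      case False
      from fg step.hyps(2) j have fin: "acts G j h \<noteq> {}" unfolding finite_game_def by auto
      from False step.hyps(2) j have "\<not> (\<exists>a\<in>acts G j h. \<exists>b\<in>acts G j h. a \<noteq> b)"
        unfolding active_def by auto
      with fin obtain a where "acts G j h = {a}" by blast
      then show ?thesis using False by simp
    qed
    then show ?thesis unfolding next_prof_def by auto
  qed
  with fg step.hyps(2) show ?case unfolding finite_game_def by blast
qed


lemma zeta_in_Z:
  assumes fg: "finite_game G" and ps: "\<forall>k\<in>players G. p k \<in> Strats G k"
  shows "zeta G p \<in> Zset G"
proof -
  define \<sigma> where "\<sigma> k = (SOME s. s \<in> std_strats G k \<and> p k = s |` {X \<in> info G k. allows G k s X})" for k
  have \<sigma>: "\<sigma> k \<in> std_strats G k \<and> p k = \<sigma> k |` {X \<in> info G k. allows G k (\<sigma> k) X}"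
    if "k \<in> players G" for k
  proof -
    from ps that obtain s where "s \<in> std_strats G k" "p k = s |` {X \<in> info G k. allows G k s X}"
      unfolding Strats_def by auto
    then have "\<exists>s. s \<in> std_strats G k \<and> p k = s |` {X \<in> info G k. allows G k s X}" by blast
    from someI_ex[OF this] show ?thesis unfolding \<sigma>_def .
  qed
  have std: "\<forall>k\<in>players G. \<sigma> k \<in> std_strats G k" using \<sigma> by blast
  have sp: "on_path G \<sigma> h" if "on_path G p h" for h
    using that
  proof (induction rule: on_path.induct)
    case Nil then show ?case by (rule on_path.Nil)
  next
    case (step h)
    have "next_prof G p h = next_prof G \<sigma> h"
      unfolding next_prof_def
    proof (rule restrict_ext)
      fix k assume k: "k \<in> players G"
      show "(if active G k h then the (p k (infoset_of G k h)) else the_elem (acts G k h)) =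
            (if active G k h then the (\<sigma> k (infoset_of G k h)) else the_elem (acts G k h))"
      proof (cases "active G k h")
        case True
        from infoset_of_props[OF fg k True] have X: "infoset_of G k h \<in> info G k" "h \<in> infoset_of G k h" by auto
        have "allows G k (\<sigma> k) (infoset_of G k h)"
          unfolding allows_def
          apply (rule exI[of _ \<sigma>])
          using std X(2) step.IH by blast
        with \<sigma>[OF k] X(1) have "p k (infoset_of G k h) = \<sigma> k (infoset_of G k h)" by simp
        then show ?thesis by simp
      qed simp
    qed
    then show ?case using on_path.step[OF step.IH step.hyps(2)] by simp
  qed
  have ph: "h \<in> hists G" if "on_path G p h" for h
    using std_path_hists[OF fg std sp[OF that]] .
  define P where "P = {h. on_path G p h}"
  have "P \<subseteq> hists G" using ph unfolding P_def by blast
  moreover have "finite (hists G)" using fg unfolding finite_game_def by (elim conjE)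
  ultimately have finP: "finite P" using finite_subset by blast
  have "[] \<in> P" unfolding P_def by (simp add: on_path.Nil)
  hence ne: "length ` P \<noteq> {}" by blast
  define m where "m = Max (length ` P)"
  have "m \<in> length ` P" unfolding m_def using finP ne by simp
  then obtain z where z: "z \<in> P" "length z = m" by blast
  have zmax: "length h \<le> length z" if "h \<in> P" for h
    using z(2) that finP unfolding m_def by simp
  have "\<not> nonterm G z"
  proof
    assume "nonterm G z"
    hence "z @ [next_prof G p z] \<in> P" using z(1) on_path.step unfolding P_def by auto
    from zmax[OF this] show False by simp
  qed
  moreover have "z \<in> hists G" using ph z(1) unfolding P_def by auto
  ultimately have zt: "terminal G z" unfolding nonterm_def by simp
  have "\<exists>!z. z \<in> Zset G \<and> on_path G p z"
  proof (rule ex1I[of _ z])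
    show "z \<in> Zset G \<and> on_path G p z" using zt z(1) unfolding P_def Zset_def by simp
    fix y assume "y \<in> Zset G \<and> on_path G p y"
    then show "y = z" using terminal_unique[of G p y z] zt z(1) unfolding P_def Zset_def by simp
  qed
  from theI'[OF this] show ?thesis unfolding zeta_def by blast
qed

lemma finite_Strats:
  assumes fg: "finite_game G" and i: "i \<in> players G"
  shows "finite (Strats G i)"
proof -
  from fg i have U: "\<Union>(info G i) = {h. active G i h}" and ne: "\<forall>X\<in>info G i. X \<noteq> {}"
    unfolding finite_game_def by auto
  have fh: "finite (hists G)" using fg unfolding finite_game_def by (elim conjE)
  have acth: "{h. active G i h} \<subseteq> hists G" unfolding active_def nonterm_def by auto
  have "info G i \<subseteq> Pow (hists G)" using U acth by blast
  hence fi: "finite (info G i)" using fh finite_subset by blast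
  define B where "B = (\<Union>h\<in>{h. active G i h}. acts G i h)"
  have fB: "finite B" unfolding B_def
  proof (rule finite_UN_I)
    show "finite {h. active G i h}" using acth fh finite_subset by blast
    fix h assume "h \<in> {h. active G i h}"
    then have "nonterm G h" unfolding active_def by simp
    moreover have "\<forall>h. nonterm G h \<longrightarrow> (\<forall>i\<in>players G. finite (acts G i h) \<and> acts G i h \<noteq> {})"
      using fg unfolding finite_game_def by (elim conjE) (intro allI impI, blast)
    ultimately show "finite (acts G i h)" using i by blast
  qed
  have "std_strats G i \<subseteq> {m. dom m = info G i \<and> ran m \<subseteq> B}"
  proof
    fix s assume s: "s \<in> std_strats G i"
    have d: "dom s = info G i" using s unfolding std_strats_def by auto
    have "ran s \<subseteq> B"
    proof
      fix a assume "a \<in> ran s"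
      then obtain X where sX: "s X = Some a" unfolding ran_def by auto
      hence Xi: "X \<in> info G i" using d by auto
      with ne obtain h where h: "h \<in> X" by blast
      have "the (s X) \<in> acts G i h" using s Xi h unfolding std_strats_def by blast
      hence "a \<in> acts G i h" using sX by simp
      moreover have "active G i h" using U Xi h by blast
      ultimately show "a \<in> B" unfolding B_def by blast
    qed
    with d show "s \<in> {m. dom m = info G i \<and> ran m \<subseteq> B}" by simp
  qed
  hence "finite (std_strats G i)" using finite_set_of_finite_maps[OF fi fB] finite_subset by blast
  then show ?thesis unfolding Strats_def by simp
qed


theorem proposition4:
  fixes G :: "('i,'a) game"
    and u :: "'i \<Rightarrow> ('i,'a) hist \<Rightarrow> real"
    and R :: "'i \<Rightarrow> ('i,'a) strat set"
  assumes "finite_game G"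
    and "\<forall>j\<in>players G. utility_rep G j (u j)"
    and "restriction G R"
  shows "(\<Pi>\<^sub>E j\<in>players G. MM G R u j) \<subseteq> (\<Pi>\<^sub>E j\<in>players G. UU G R j)"
proof -
  have fpl: "finite (players G)" using assms(1) unfolding finite_game_def by (elim conjE)
  have RS: "R k \<subseteq> Strats G k" "finite (R k)" if "k \<in> players G" for k
    using assms(3) that finite_Strats[OF assms(1) that] finite_subset
    unfolding restriction_def by blast+
  have "MM G R u j \<subseteq> UU G R j" if j: "j \<in> players G" for j
  proof
    fix si assume si: "si \<in> MM G R u j"
    hence siR: "si \<in> R j" unfolding MM_def by simp
    show "si \<in> UU G R j"
    proof (rule ccontr)
      assume "si \<notin> UU G R j"
      with siR have "cond_B_dominated G R j si" unfolding UU_def by simp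
      then obtain X where X: "X \<in> Hs G j si" "R_at G R j X \<noteq> {}" "R_others_at G R j X \<noteq> {}"
        "B_dominated G j (R_at G R j X) (R_others_at G R j X) si"
        unfolding cond_B_dominated_def by blast
      define Ps where "Ps = R_at G R j X"
      define Pmi where "Pmi = R_others_at G R j X"
      have PsS: "Ps \<subseteq> Strats G j" using RS[OF j] unfolding Ps_def R_at_def by auto
      have finPs: "finite Ps" using RS[OF j] unfolding Ps_def R_at_def by auto
      have PmiS: "Pmi \<subseteq> Strats_others G j"
        unfolding Pmi_def R_others_at_def Strats_others_at_def by auto
      have "finite (R_others G R j)" unfolding R_others_def
        by (rule finite_PiE) (use fpl RS in auto)
      hence finPmi: "finite Pmi" unfolding Pmi_def R_others_at_def by auto
      have Zin: "zeta G (join j t smi) \<in> Zset G" if "t \<in> Ps" "smi \<in> Pmi" for t smi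
      proof (rule zeta_in_Z[OF assms(1)])
        have t: "t \<in> Strats G j" using that(1) PsS by auto
        have smi: "smi \<in> (\<Pi>\<^sub>E k\<in>players G - {j}. Strats G k)"
          using that(2) PmiS unfolding Strats_others_def by auto
        show "\<forall>k\<in>players G. join j t smi k \<in> Strats G k"
        proof
          fix k assume k: "k \<in> players G"
          show "join j t smi k \<in> Strats G k"
          proof (cases "k = j")
            case True then show ?thesis using t unfolding join_def by simp
          next
            case False then show ?thesis using smi k unfolding join_def by (auto simp: PiE_iff)
          qed
        qed
      qed
      have ur: "\<forall>z\<in>Zset G. \<forall>z'\<in>Zset G. u j z \<ge> u j z' \<longleftrightarrow> pref G j z z'"
        using assms(2) j unfolding utility_rep_def by blast
      define f where "f t s = u j (zeta G (join j t s))" for t s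
      have siPs: "si \<in> Ps" using X(4) unfolding B_dominated_def Ps_def by blast
      have dom: "\<forall>Q. Q \<noteq> {} \<and> Q \<subseteq> Pmi \<longrightarrow> (\<exists>t\<in>Ps. (\<forall>s\<in>Q. f t s \<ge> f si s) \<and> (\<exists>s\<in>Q. f t s > f si s))"
      proof (intro allI impI)
        fix Q assume Q: "Q \<noteq> {} \<and> Q \<subseteq> Pmi"
        have "\<exists>ti\<in>Ps. weakly_dominated_by G j Ps Q si ti"
          using X(4) Q unfolding B_dominated_def Ps_def Pmi_def by blast
        then obtain t where t: "t \<in> Ps"
          "\<forall>smi\<in>Q. pref G j (zeta G (join j t smi)) (zeta G (join j si smi))"
          "\<exists>smi\<in>Q. strict_pref G j (zeta G (join j t smi)) (zeta G (join j si smi))"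
          unfolding weakly_dominated_by_def by blast
        have "\<forall>s\<in>Q. f t s \<ge> f si s"
        proof
          fix s assume s: "s \<in> Q"
          hence sP: "s \<in> Pmi" using Q by auto
          have "zeta G (join j t s) \<in> Zset G" "zeta G (join j si s) \<in> Zset G"
            using Zin[OF t(1) sP] Zin[OF siPs sP] .
          then show "f t s \<ge> f si s" using ur t(2) s unfolding f_def by blast
        qed
        moreover have "\<exists>s\<in>Q. f t s > f si s"
        proof -
          from t(3) obtain s where s: "s \<in> Q"
            "strict_pref G j (zeta G (join j t s)) (zeta G (join j si s))" by blast
          hence sP: "s \<in> Pmi" using Q by auto
          have Z: "zeta G (join j t s) \<in> Zset G" "zeta G (join j si s) \<in> Zset G"
            using Zin[OF t(1) sP] Zin[OF siPs sP] .
          have "\<not> pref G j (zeta G (join j si s)) (zeta G (join j t s))"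
            using s(2) unfolding strict_pref_def by blast
          hence "\<not> u j (zeta G (join j si s)) \<ge> u j (zeta G (join j t s))"
            using ur Z by blast
          hence "f t s > f si s" unfolding f_def by simp
          with s(1) show ?thesis by blast
        qed
        ultimately show "\<exists>t\<in>Ps. (\<forall>s\<in>Q. f t s \<ge> f si s) \<and> (\<exists>s\<in>Q. f t s > f si s)"
          using t(1) by blast
      qed
      have "Pmi \<noteq> {}" using X(3) unfolding Pmi_def .
      from mix_lemma[OF finPs finPmi dom _ this] obtain \<sigma> where
        \<sigma>: "\<forall>t\<in>Ps. \<sigma> t \<ge> 0" "sum \<sigma> Ps = 1" "\<forall>s\<in>Pmi. (\<Sum>t\<in>Ps. \<sigma> t * f t s) > f si s"
        by blast
      have "strictly_dominated_mixed G j (u j) Ps Pmi si"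
        unfolding strictly_dominated_mixed_def
        using \<sigma> unfolding f_def by blast
      moreover have "\<not> strictly_dominated_mixed G j (u j) Ps Pmi si"
        using si X(1,2,3) unfolding MM_def Ps_def Pmi_def by blast
      ultimately show False by contradiction
    qed
  qed
  then show ?thesis by (rule PiE_mono)
qed

end
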